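(* Let $\nu>0$, $b>0$ and let $f:\mathbb{R}\to\mathbb{R}$ be continuously differentiable with: $f(0)=f(a)=f(1)=0$ for some $a\in(0,1)$; $f(x)<0$ for $x\in(0,a)$ and $f(x)>0$ for $x\in(a,1)$; $f'(0)<0$, $f'(a)>0$, $f'(1)<0$; and $\int_0^1 f(v)\,dv\ge 0$. Let $\hat v:\mathbb{R}\to\mathbb{R}$ be a monotone increasing $C^2$ function with $\lim_{x\to-\infty}\hat v(x)=0$, $\lim_{x\to+\infty}\hat v(x)=1$, satisfying $c\hat v_x=\nu\hat v_{xx}+bf(\hat v)$ on $\mathbb{R}$ for some constant $c\in\mathbb{R}$. Then: (i) $\hat v_x^2(x)\le \frac{2b}{\nu}\int_{\hat v(x)}^1 f(v)\,dv$ for all $x\in\mathbb{R}$; in particular $\lim_{x\to+\infty}e^{-\alpha\frac{c}{\nu}x}\hat v_x^2(x)=0$ for all $\alpha\ge 0$. (ii) The function $x\mapsto e^{-2\frac{c}{\nu}x}\hat v_x^2(x)$ is increasing on $\{x\le \hat v^{-1}(a)\}$ and decreasing on $\{x\ge \hat v^{-1}(a)\}$; in particular $\lim_{x\to\pm\infty}e^{-\alpha\frac{c}{\nu}x}\hat v_x^2(x)=0$ for all $\alpha\in[0,2)$.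
   Context: $\hat v$ is a travelling wave of the reaction–diffusion equation $\partial_t v=\nu v_{xx}+bf(v)$ with wave speed $c$; under the assumption $\int_0^1 f\,dv\ge 0$ it is known that $c\ge 0$. *)

theory Defs
  imports "HOL-Analysis.Analysis"
begin

end

theory Submission
  imports Defs
begin

theorem lemma1p1:
  fixes \<nu> b a c :: real
    and f f' v v' v'' :: "real \<Rightarrow> real"
  assumes nu_pos: "\<nu> > 0" and b_pos: "b > 0"
    and f_deriv: "\<And>x. (f has_real_derivative f' x) (at x)"
    and f'_cont: "continuous_on UNIV f'"
    and a_in: "0 < a" "a < 1"
    and f_zeros: "f 0 = 0" "f a = 0" "f 1 = 0"
    and f_neg: "\<And>x. 0 < x \<Longrightarrow> x < a \<Longrightarrow> f x < 0"
    and f_pos: "\<And>x. a < x \<Longrightarrow> x < 1 \<Longrightarrow> f x > 0"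
    and f'_signs: "f' 0 < 0" "f' a > 0" "f' 1 < 0"
    and f_int: "integral {0..1} f \<ge> 0"
    and v_mono: "mono v"
    and v_deriv: "\<And>x. (v has_real_derivative v' x) (at x)"
    and v'_deriv: "\<And>x. (v' has_real_derivative v'' x) (at x)"
    and v''_cont: "continuous_on UNIV v''"
    and v_lim_bot: "(v \<longlongrightarrow> 0) at_bot"
    and v_lim_top: "(v \<longlongrightarrow> 1) at_top"
    and ode: "\<And>x. c * v' x = \<nu> * v'' x + b * f (v x)"
  shows
    "(\<forall>x. (v' x)\<^sup>2 \<le> 2 * b / \<nu> * integral {v x..1} f)
   \<and> (\<forall>\<alpha>\<ge>0. ((\<lambda>x. exp (- \<alpha> * (c / \<nu>) * x) * (v' x)\<^sup>2) \<longlongrightarrow> 0) at_top)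
   \<and> (\<forall>x0. v x0 = a \<longrightarrow>
          mono_on {..x0} (\<lambda>x. exp (- 2 * (c / \<nu>) * x) * (v' x)\<^sup>2)
        \<and> antimono_on {x0..} (\<lambda>x. exp (- 2 * (c / \<nu>) * x) * (v' x)\<^sup>2))
   \<and> (\<forall>\<alpha>. 0 \<le> \<alpha> \<and> \<alpha> < 2 \<longrightarrow>
          ((\<lambda>x. exp (- \<alpha> * (c / \<nu>) * x) * (v' x)\<^sup>2) \<longlongrightarrow> 0) at_top
        \<and> ((\<lambda>x. exp (- \<alpha> * (c / \<nu>) * x) * (v' x)\<^sup>2) \<longlongrightarrow> 0) at_bot)"
proof -
  have v_le1: "v x \<le> 1" for x
  proof (rule tendsto_lowerbound[OF v_lim_top])
    show "\<forall>\<^sub>F y in at_top. v x \<le> v y"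
      using eventually_ge_at_top[of x] by eventually_elim (use v_mono in \<open>auto simp: mono_def\<close>)
  qed simp
  have v_ge0: "0 \<le> v x" for x
  proof (rule tendsto_upperbound[OF v_lim_bot])
    show "\<forall>\<^sub>F y in at_bot. v y \<le> v x"
      using eventually_le_at_bot[of x] by eventually_elim (use v_mono in \<open>auto simp: mono_def\<close>)
  qed simp
  have v'_nn: "0 \<le> v' x" for x
  proof (rule ccontr)
    assume "\<not> 0 \<le> v' x"
    then obtain d where "d > 0" "\<forall>h>0. h < d \<longrightarrow> v x > v (x + h)"
      using DERIV_neg_dec_right[OF v_deriv[of x]] by force
    then have "v x > v (x + d/2)" by auto
    moreover have "v x \<le> v (x + d/2)" using v_mono \<open>d>0\<close> by (auto simp: mono_def)
    ultimately show False by simp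
  qed
  have f_cont: "continuous_on UNIV f"
    using f_deriv by (meson DERIV_isCont continuous_at_imp_continuous_on)
  define F where "F u = integral {-1..u} f" for u
  have F_deriv: "(F has_real_derivative f u) (at u)" if "-1 < u" "u < 2" for u
  proof -
    have "(F has_real_derivative f u) (at u within {-1..2})"
      unfolding F_def[abs_def]
      by (rule integral_has_real_derivative) (use that f_cont continuous_on_subset in auto)
    moreover have "at u within {-1..2} = at u"
      by (rule at_within_interior) (use that in auto)
    ultimately show ?thesis by simp
  qed
  have intF: "integral {u..1} f = F 1 - F u" if "0 \<le> u" "u \<le> 1" for u
  proof -
    have "integral {-1..u} f + integral {u..1} f = integral {-1..1} f"
      using Henstock_Kurzweil_Integration.integral_combine[where a="-1" and c=u and b=1 and f=f] that f_cont
      by (meson integrable_continuous_real continuous_on_subset subset_UNIV le_minus_one_simps(1) order.trans)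
    then show ?thesis unfolding F_def by simp
  qed
  have F10: "F 0 \<le> F 1" using intF[of 0] f_int by simp
  define E where "E x = \<nu>/2 * (v' x)\<^sup>2 + b * F (v x)" for x
  have E_deriv: "(E has_real_derivative c * (v' x)\<^sup>2) (at x)" for x
  proof -
    have Fv: "((\<lambda>x. F (v x)) has_real_derivative f (v x) * v' x) (at x)"
      by (rule DERIV_chain2[OF F_deriv v_deriv]) (use v_ge0[of x] v_le1[of x] in auto)
    have sq: "((\<lambda>x. (v' x)\<^sup>2) has_real_derivative v'' x * v' x + v' x * v'' x) (at x)"
      unfolding power2_eq_square using DERIV_mult[OF v'_deriv[of x] v'_deriv[of x]] by (simp add: algebra_simps)
    have "(E has_real_derivative \<nu>/2 * (v'' x * v' x + v' x * v'' x) + b * (f (v x) * v' x)) (at x)"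
      unfolding E_def[abs_def] by (intro DERIV_add DERIV_cmult sq Fv)
    moreover have "\<nu>/2 * (v'' x * v' x + v' x * v'' x) + b * (f (v x) * v' x) = c * (v' x)\<^sup>2"
    proof -
      have "c * (v' x)\<^sup>2 = v' x * (c * v' x)" by (simp add: power2_eq_square)
      also have "\<dots> = v' x * (\<nu> * v'' x + b * f (v x))" by (simp add: ode)
      finally show ?thesis by (simp add: algebra_simps)
    qed
    ultimately show ?thesis by simp
  qed
  have small_top: "\<exists>y\<ge>M. v' y < d" if "d > 0" for d M
  proof (rule ccontr)
    assume "\<not> ?thesis"
    then have ge: "\<And>y. y \<ge> M \<Longrightarrow> v' y \<ge> d" by force
    obtain z where z: "M < z" "z < M + 2/d" "v (M + 2/d) - v M = (M + 2/d - M) * v' z"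
      using MVT2[of M "M + 2/d" v v'] v_deriv \<open>d>0\<close> by auto
    have "(2/d) * v' z \<ge> (2/d) * d" using ge[of z] z \<open>d>0\<close> by (intro mult_left_mono) auto
    then have "(2/d) * v' z \<ge> 2" using \<open>d>0\<close> by simp
    then show False using z(3) v_le1[of "M + 2/d"] v_ge0[of M] by simp
  qed
  have small_bot: "\<exists>y\<le>M. v' y < d" if "d > 0" for d M
  proof (rule ccontr)
    assume "\<not> ?thesis"
    then have ge: "\<And>y. y \<le> M \<Longrightarrow> v' y \<ge> d" by force
    obtain z where z: "M - 2/d < z" "z < M" "v M - v (M - 2/d) = (M - (M - 2/d)) * v' z"
      using MVT2[of "M - 2/d" M v v'] v_deriv \<open>d>0\<close> by auto
    have "(2/d) * v' z \<ge> (2/d) * d" using ge[of z] z \<open>d>0\<close> by (intro mult_left_mono) auto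
    then have "(2/d) * v' z \<ge> 2" using \<open>d>0\<close> by simp
    then show False using z(3) v_le1[of M] v_ge0[of "M - 2/d"] by simp
  qed
  have Fv_top: "((\<lambda>x. b * F (v x)) \<longlongrightarrow> b * F 1) at_top"
    by (intro tendsto_mult_left isCont_tendsto_compose[OF _ v_lim_top] DERIV_isCont[OF F_deriv]) auto
  have Fv_bot: "((\<lambda>x. b * F (v x)) \<longlongrightarrow> b * F 0) at_bot"
    by (intro tendsto_mult_left isCont_tendsto_compose[OF _ v_lim_bot] DERIV_isCont[OF F_deriv]) auto
  have kin: "\<nu>/2 * (v' y)\<^sup>2 < e/2" if "e > 0" "v' y < min 1 (e/\<nu>)" for e y
  proof -
    have "(v' y)\<^sup>2 \<le> v' y" using v'_nn[of y] that(2)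
      by (simp add: power2_eq_square mult_left_le)
    moreover have "\<nu> * v' y < e" using that(2) nu_pos by (simp add: field_simps)
    ultimately have "\<nu> * (v' y)\<^sup>2 < e" using nu_pos by (meson mult_left_mono less_le_trans less_imp_le order_le_less_trans)
    then show ?thesis by simp
  qed
  have ET: "\<exists>y\<ge>M. \<bar>E y - b * F 1\<bar> < e" if "e > 0" for e M
  proof -
    have "\<forall>\<^sub>F x in at_top. dist (b * F (v x)) (b * F 1) < e/2"
      using tendstoD[OF Fv_top, of "e/2"] that by simp
    then obtain N where N: "\<And>x. x \<ge> N \<Longrightarrow> \<bar>b * F (v x) - b * F 1\<bar> < e/2"
      by (auto simp: eventually_at_top_linorder dist_real_def)
    obtain y where y: "y \<ge> max M N" "v' y < min 1 (e/\<nu>)"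
      using small_top[of "min 1 (e/\<nu>)" "max M N"] \<open>e>0\<close> nu_pos by auto
    have "\<nu>/2 * (v' y)\<^sup>2 < e/2" by (rule kin[OF that y(2)])
    moreover have "0 \<le> \<nu>/2 * (v' y)\<^sup>2" using nu_pos by simp
    moreover note N[of y]
    ultimately have "\<bar>E y - b * F 1\<bar> < e" unfolding E_def abs_less_iff using y(1) by auto
    then show ?thesis using y(1) by (intro exI[of _ y]) auto
  qed
  have EB: "\<exists>y\<le>M. \<bar>E y - b * F 0\<bar> < e" if "e > 0" for e M
  proof -
    have "\<forall>\<^sub>F x in at_bot. dist (b * F (v x)) (b * F 0) < e/2"
      using tendstoD[OF Fv_bot, of "e/2"] that by simp
    then obtain N where N: "\<And>x. x \<le> N \<Longrightarrow> \<bar>b * F (v x) - b * F 0\<bar> < e/2"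
      by (auto simp: eventually_at_bot_linorder dist_real_def)
    obtain y where y: "y \<le> min M N" "v' y < min 1 (e/\<nu>)"
      using small_bot[of "min 1 (e/\<nu>)" "min M N"] \<open>e>0\<close> nu_pos by auto
    have "\<nu>/2 * (v' y)\<^sup>2 < e/2" by (rule kin[OF that y(2)])
    moreover have "0 \<le> \<nu>/2 * (v' y)\<^sup>2" using nu_pos by simp
    moreover note N[of y]
    ultimately have "\<bar>E y - b * F 0\<bar> < e" unfolding E_def abs_less_iff using y(1) by auto
    then show ?thesis using y(1) by (intro exI[of _ y]) auto
  qed
  have E_up: "E x \<le> E y" if "c \<ge> 0" "x \<le> y" for x y
  proof (rule DERIV_nonneg_imp_nondecreasing[OF that(2)])
    fix t show "\<exists>y. DERIV E t :> y \<and> y \<ge> 0"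
      using E_deriv[of t] that(1) by (intro exI[of _ "c * (v' t)\<^sup>2"]) simp
  qed
  have E_down: "E y \<le> E x" if "c \<le> 0" "x \<le> y" for x y
  proof (rule DERIV_nonpos_imp_nonincreasing[OF that(2)])
    fix t show "\<exists>y. DERIV E t :> y \<and> y \<le> 0"
      using E_deriv[of t] that(1) by (intro exI[of _ "c * (v' t)\<^sup>2"]) (simp add: mult_nonpos_nonneg)
  qed
  have v_nonconst: False if "\<And>x. v' x = 0"
  proof -
    have vc: "v x = v 0" for x by (rule DERIV_isconst_all) (use v_deriv that in auto)
    have ev: "\<forall>\<^sub>F x in F. v x = v 0" for F by (intro always_eventually allI vc)
    have "((\<lambda>_::real. v 0) \<longlongrightarrow> 1) at_top" using v_lim_top tendsto_cong[OF ev] by blast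
    then have "v 0 = 1" by (simp add: tendsto_const_iff)
    moreover have "((\<lambda>_::real. v 0) \<longlongrightarrow> 0) at_bot" using v_lim_bot tendsto_cong[OF ev] by blast
    then have "v 0 = 0" by (simp add: tendsto_const_iff)
    ultimately show False by simp
  qed
  have c_nn: "c \<ge> 0"
  proof (rule ccontr)
    assume "\<not> c \<ge> 0"
    then have cneg: "c < 0" by simp
    have lo: "b * F 1 \<le> E x" for x
    proof (rule field_le_epsilon)
      fix e :: real assume "e > 0"
      then obtain y where "y \<ge> x" "\<bar>E y - b * F 1\<bar> < e" using ET by blast
      moreover have "E y \<le> E x" using E_down cneg \<open>y \<ge> x\<close> by simp
      ultimately show "b * F 1 \<le> E x + e" by linarith
    qed
    have hi: "E x \<le> b * F 0" for x
    proof (rule field_le_epsilon)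
      fix e :: real assume "e > 0"
      then obtain y where "y \<le> x" "\<bar>E y - b * F 0\<bar> < e" using EB by blast
      moreover have "E x \<le> E y" using E_down cneg \<open>y \<le> x\<close> by simp
      ultimately show "E x \<le> b * F 0 + e" by linarith
    qed
    have "b * F 0 \<le> b * F 1" using F10 b_pos by simp
    then have Ec: "E = (\<lambda>_. b * F 0)" using lo hi by (intro ext) (meson order.antisym order.trans)
    have "v' x = 0" for x
    proof -
      have "(E has_real_derivative 0) (at x)" unfolding Ec by simp
      then have "c * (v' x)\<^sup>2 = 0" using DERIV_unique E_deriv by blast
      then show ?thesis using cneg by simp
    qed
    then show False using v_nonconst by blast
  qed
  have E_le: "E x \<le> b * F 1" for x
  proof (rule field_le_epsilon)
    fix e :: real assume "e > 0"
    then obtain y where "y \<ge> x" "\<bar>E y - b * F 1\<bar> < e" using ET by blast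
    moreover have "E x \<le> E y" using E_up c_nn \<open>y \<ge> x\<close> by simp
    ultimately show "E x \<le> b * F 1 + e" by linarith
  qed
  have part1': "(v' x)\<^sup>2 \<le> 2 / \<nu> * (b * F 1 - b * F (v x))" for x
  proof -
    have "\<nu>/2 * (v' x)\<^sup>2 \<le> b * F 1 - b * F (v x)" using E_le[of x] unfolding E_def by simp
    then show "(v' x)\<^sup>2 \<le> 2 / \<nu> * (b * F 1 - b * F (v x))" using nu_pos by (simp add: field_simps)
  qed
  have part1: "(v' x)\<^sup>2 \<le> 2 * b / \<nu> * integral {v x..1} f" for x
  proof -
    have "(v' x)\<^sup>2 \<le> 2 / \<nu> * (b * F 1 - b * F (v x))" by (rule part1')
    also have "\<dots> = 2 * b / \<nu> * integral {v x..1} f" by (simp add: intF[OF v_ge0 v_le1] algebra_simps diff_divide_distrib)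
    finally show ?thesis .
  qed
  have vsq_top: "((\<lambda>x. (v' x)\<^sup>2) \<longlongrightarrow> 0) at_top"
  proof (rule tendsto_sandwich)
    show "\<forall>\<^sub>F x in at_top. 0 \<le> (v' x)\<^sup>2" by simp
    show "\<forall>\<^sub>F x in at_top. (v' x)\<^sup>2 \<le> 2 / \<nu> * (b * F 1 - b * F (v x))"
      by (intro always_eventually allI part1')
    have "((\<lambda>x. 2 / \<nu> * (b * F 1 - b * F (v x))) \<longlongrightarrow> 2 / \<nu> * (b * F 1 - b * F 1)) at_top"
      by (intro tendsto_intros Fv_top)
    then show "((\<lambda>x. 2 / \<nu> * (b * F 1 - b * F (v x))) \<longlongrightarrow> 0) at_top" by simp
  qed (simp)
  have lim_top: "((\<lambda>x. exp (- \<alpha> * (c / \<nu>) * x) * (v' x)\<^sup>2) \<longlongrightarrow> 0) at_top" if "\<alpha> \<ge> 0" for \<alpha>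
  proof (rule tendsto_sandwich[OF _ _ tendsto_const vsq_top])
    show "\<forall>\<^sub>F x in at_top. 0 \<le> exp (- \<alpha> * (c / \<nu>) * x) * (v' x)\<^sup>2" by simp
    show "\<forall>\<^sub>F x in at_top. exp (- \<alpha> * (c / \<nu>) * x) * (v' x)\<^sup>2 \<le> (v' x)\<^sup>2"
      using eventually_ge_at_top[of 0]
    proof eventually_elim
      case (elim x)
      have "0 \<le> \<alpha> * (c / \<nu>) * x" using that c_nn nu_pos elim by simp
      then have "exp (- \<alpha> * (c / \<nu>) * x) \<le> 1" by simp
      then show ?case by (simp add: mult_left_le_one_le)
    qed
  qed
  define g where "g x = exp (- 2 * (c / \<nu>) * x) * (v' x)\<^sup>2" for x
  have g_deriv: "(g has_real_derivative - (2 * b / \<nu>) * exp (- 2 * (c / \<nu>) * x) * v' x * f (v x)) (at x)" for x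
  proof -
    have ex: "((\<lambda>x. exp (- 2 * (c / \<nu>) * x)) has_real_derivative exp (- 2 * (c / \<nu>) * x) * (- 2 * (c / \<nu>))) (at x)"
      using nu_pos by (auto intro!: derivative_eq_intros)
    have sq: "((\<lambda>x. (v' x)\<^sup>2) has_real_derivative v'' x * v' x + v'' x * v' x) (at x)"
      unfolding power2_eq_square using DERIV_mult[OF v'_deriv[of x] v'_deriv[of x]] by simp
    have "(g has_real_derivative exp (- 2 * (c / \<nu>) * x) * (- 2 * (c / \<nu>)) * (v' x)\<^sup>2
          + (v'' x * v' x + v'' x * v' x) * exp (- 2 * (c / \<nu>) * x)) (at x)"
      unfolding g_def[abs_def] by (rule DERIV_mult[OF ex sq])
    moreover have "exp (- 2 * (c / \<nu>) * x) * (- 2 * (c / \<nu>)) * (v' x)\<^sup>2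
          + (v'' x * v' x + v'' x * v' x) * exp (- 2 * (c / \<nu>) * x)
          = - (2 * b / \<nu>) * exp (- 2 * (c / \<nu>) * x) * v' x * f (v x)"
      using ode[of x] nu_pos by (simp add: field_simps power2_eq_square) algebra
    ultimately show ?thesis by simp
  qed
  have f_le: "f u \<le> 0" if "0 \<le> u" "u \<le> a" for u
    using f_neg[of u] f_zeros that by (cases "u = 0 \<or> u = a") auto
  have f_ge: "f u \<ge> 0" if "a \<le> u" "u \<le> 1" for u
    using f_pos[of u] f_zeros that by (cases "u = a \<or> u = 1") auto
  have g_up: "g x \<le> g y" if "x \<le> y" "v y \<le> a" for x y
  proof (rule DERIV_nonneg_imp_nondecreasing[OF that(1)])
    fix t assume t: "x \<le> t" "t \<le> y"
    have "v t \<le> v y" using v_mono t by (auto simp: mono_def)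
    then have "f (v t) \<le> 0" using f_le v_ge0 that(2) by auto
    then have "0 \<le> (2 * b / \<nu>) * exp (- 2 * (c / \<nu>) * t) * v' t * (- f (v t))"
      using b_pos nu_pos v'_nn[of t] by (intro mult_nonneg_nonneg) auto
    then show "\<exists>y. DERIV g t :> y \<and> y \<ge> 0" using g_deriv[of t] by (intro exI[of _ "- (2 * b / \<nu>) * exp (- 2 * (c / \<nu>) * t) * v' t * f (v t)"]) simp
  qed
  have g_down: "g y \<le> g x" if "x \<le> y" "a \<le> v x" for x y
  proof (rule DERIV_nonpos_imp_nonincreasing[OF that(1)])
    fix t assume t: "x \<le> t" "t \<le> y"
    have "v x \<le> v t" using v_mono t by (auto simp: mono_def)
    then have "f (v t) \<ge> 0" using f_ge v_le1 that(2) by auto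
    then have "0 \<le> (2 * b / \<nu>) * exp (- 2 * (c / \<nu>) * t) * v' t * f (v t)"
      using b_pos nu_pos v'_nn[of t] by (intro mult_nonneg_nonneg) auto
    then show "\<exists>y. DERIV g t :> y \<and> y \<le> 0" using g_deriv[of t] by (intro exI[of _ "- (2 * b / \<nu>) * exp (- 2 * (c / \<nu>) * t) * v' t * f (v t)"]) simp
  qed
  have part2: "mono_on {..x0} g \<and> antimono_on {x0..} g" if "v x0 = a" for x0
  proof
    show "mono_on {..x0} g"
    proof (rule mono_onI)
      fix r s assume "r \<in> {..x0}" "s \<in> {..x0}" "r \<le> s"
      moreover have "v s \<le> v x0" using v_mono \<open>s \<in> {..x0}\<close> by (auto simp: mono_def)
      ultimately show "g r \<le> g s" using g_up that by auto
    qed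
    show "antimono_on {x0..} g"
    proof (rule monotone_onI)
      fix r s assume "r \<in> {x0..}" "s \<in> {x0..}" "r \<le> s"
      moreover have "v x0 \<le> v r" using v_mono \<open>r \<in> {x0..}\<close> by (auto simp: mono_def)
      ultimately show "g r \<ge> g s" using g_down that by auto
    qed
  qed
  have lim_bot: "((\<lambda>x. exp (- \<alpha> * (c / \<nu>) * x) * (v' x)\<^sup>2) \<longlongrightarrow> 0) at_bot"
    if "0 \<le> \<alpha>" "\<alpha> < 2" for \<alpha>
  proof (cases "c = 0")
    case True
    have Ec: "E x = E 0" for x
      by (rule DERIV_isconst_all) (use E_deriv True in simp)
    have "\<bar>E 0 - b * F 0\<bar> \<le> 0"
    proof (rule field_le_epsilon)
      fix e :: real assume "e > 0"
      then obtain y where "\<bar>E y - b * F 0\<bar> < e" using EB by blast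
      then show "\<bar>E 0 - b * F 0\<bar> \<le> 0 + e" using Ec[of y] by simp
    qed
    then have E0: "E x = b * F 0" for x using Ec[of x] by simp
    have eq: "(v' x)\<^sup>2 = 2 / \<nu> * (b * F 0 - b * F (v x))" for x
      using E0[of x] nu_pos unfolding E_def by (simp add: field_simps)
    have "((\<lambda>x. 2 / \<nu> * (b * F 0 - b * F (v x))) \<longlongrightarrow> 2 / \<nu> * (b * F 0 - b * F 0)) at_bot"
      by (intro tendsto_intros Fv_bot)
    then show ?thesis using True by (simp add: eq)
  next
    case False
    then have cpos: "c > 0" using c_nn by simp
    have "\<forall>\<^sub>F x in at_bot. v x < a" using order_tendstoD(2)[OF v_lim_bot a_in(1)] .
    then obtain p where p: "v p < a" by (auto simp: eventually_at_bot_linorder)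
    define k where "k = (2 - \<alpha>) * (c / \<nu>)"
    have kpos: "k > 0" unfolding k_def using that cpos nu_pos by simp
    have ident: "exp (- \<alpha> * (c / \<nu>) * x) * (v' x)\<^sup>2 = exp (k * x) * g x" for x
    proof -
      have "exp (k * x) * exp (- 2 * (c / \<nu>) * x) = exp (- \<alpha> * (c / \<nu>) * x)"
        unfolding k_def mult_exp_exp by (simp add: algebra_simps)
      then show ?thesis unfolding g_def by (metis mult.assoc)
    qed
    have ek: "((\<lambda>x. exp (k * x)) \<longlongrightarrow> 0) at_bot"
      by (rule filterlim_compose[OF exp_at_bot filterlim_tendsto_pos_mult_at_bot[OF tendsto_const kpos filterlim_ident]])
    show ?thesis
    proof (rule tendsto_sandwich)
      show "\<forall>\<^sub>F x in at_bot. 0 \<le> exp (- \<alpha> * (c / \<nu>) * x) * (v' x)\<^sup>2" by simp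
      show "\<forall>\<^sub>F x in at_bot. exp (- \<alpha> * (c / \<nu>) * x) * (v' x)\<^sup>2 \<le> exp (k * x) * g p"
        using eventually_le_at_bot[of p]
      proof eventually_elim
        case (elim x)
        then show ?case unfolding ident using g_up[of x p] p by (intro mult_left_mono) auto
      qed
      show "((\<lambda>x. exp (k * x) * g p) \<longlongrightarrow> 0) at_bot"
        using tendsto_mult[OF ek tendsto_const[of "g p"]] by simp
    qed simp
  qed
  show ?thesis
    using part1 lim_top lim_bot part2 unfolding g_def by auto
qed
end
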